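(* Let $A$ and $C$ be groups, and let $C$ act on $A$ by automorphisms in such a way that the induced action of $C$ on the abelianization $A/[A,A]$ is trivial. Then for every $m\geq 1$, $$\Gamma_m(A\rtimes C)=\Gamma_m(A)\rtimes\Gamma_m(C)\quad\text{and}\quad D_m(A\rtimes C)=D_m(A)\rtimes D_m(C).$$
   Context: For a group $G$, the lower central series is defined by $\Gamma_1(G)=G$ and $\Gamma_i(G)=[\Gamma_{i-1}(G),G]$ for $i\ge 2$. The rational lower central series is defined by $D_1(G)=G$ and, for $i\geq 2$, $D_i(G)=\{x\in G \mid x^k\in\Gamma_i(G)\text{ for some integer }k\geq 1\}$. Here $A\rtimes C$ is the semidirect product defined by the given action, and $A$, $C$ are viewed as subgroups of it. *)

theory Defs
  imports "HOL-Algebra.Algebra"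
begin

definition commutator_subgroup :: "('a, 'b) monoid_scheme \<Rightarrow> 'a set \<Rightarrow> 'a set \<Rightarrow> 'a set" where
  "commutator_subgroup G H K =
     generate G {h \<otimes>\<^bsub>G\<^esub> k \<otimes>\<^bsub>G\<^esub> inv\<^bsub>G\<^esub> h \<otimes>\<^bsub>G\<^esub> inv\<^bsub>G\<^esub> k | h k. h \<in> H \<and> k \<in> K}"

text \<open>lcs_aux G n is Gamma_(n+1)(G).\<close>
primrec lcs_aux :: "('a, 'b) monoid_scheme \<Rightarrow> nat \<Rightarrow> 'a set" where
  "lcs_aux G 0 = carrier G"
| "lcs_aux G (Suc n) = commutator_subgroup G (lcs_aux G n) (carrier G)"

definition lower_central :: "('a, 'b) monoid_scheme \<Rightarrow> nat \<Rightarrow> 'a set" where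
  "lower_central G i = lcs_aux G (i - 1)"

definition rational_lower_central :: "('a, 'b) monoid_scheme \<Rightarrow> nat \<Rightarrow> 'a set" where
  "rational_lower_central G i =
     (if i \<le> 1 then carrier G
      else {x \<in> carrier G. \<exists>k::nat. k \<ge> 1 \<and> x [^]\<^bsub>G\<^esub> k \<in> lower_central G i})"

text \<open>Semidirect product A \<rtimes> C for an action phi of C on A:
  (a,c)(a',c') = (a * phi c a', c * c').  A is identified with A \<times> {1}, C with {1} \<times> C.\<close>
definition semidirect_product ::
  "('a, 'x) monoid_scheme \<Rightarrow> ('c, 'y) monoid_scheme \<Rightarrow> ('c \<Rightarrow> 'a \<Rightarrow> 'a) \<Rightarrow> ('a \<times> 'c) monoid" where
  "semidirect_product A C \<phi> =
     \<lparr>carrier = carrier A \<times> carrier C,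
      monoid.mult = (\<lambda>(a, c) (a', c'). (a \<otimes>\<^bsub>A\<^esub> \<phi> c a', c \<otimes>\<^bsub>C\<^esub> c')),
      one = (\<one>\<^bsub>A\<^esub>, \<one>\<^bsub>C\<^esub>)\<rparr>"

end

theory Submission
  imports Defs
begin



definition cm :: "('a,'b) monoid_scheme \<Rightarrow> 'a \<Rightarrow> 'a \<Rightarrow> 'a" where
  "cm G h k = h \<otimes>\<^bsub>G\<^esub> k \<otimes>\<^bsub>G\<^esub> inv\<^bsub>G\<^esub> h \<otimes>\<^bsub>G\<^esub> inv\<^bsub>G\<^esub> k"

lemma csub_alt: "commutator_subgroup G H K = generate G {cm G h k | h k. h \<in> H \<and> k \<in> K}"
  unfolding commutator_subgroup_def cm_def by simp

context group begin

lemma inv_cancel1[simp]: "x \<in> carrier G \<Longrightarrow> y \<in> carrier G \<Longrightarrow> x \<otimes> (inv x \<otimes> y) = y"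
  by (simp add: m_assoc[symmetric])
lemma inv_cancel2[simp]: "x \<in> carrier G \<Longrightarrow> y \<in> carrier G \<Longrightarrow> inv x \<otimes> (x \<otimes> y) = y"
  by (simp add: m_assoc[symmetric])

lemma cm_closed[simp]: "h \<in> carrier G \<Longrightarrow> k \<in> carrier G \<Longrightarrow> cm G h k \<in> carrier G"
  unfolding cm_def by simp

lemma csub_subgroup: "H \<subseteq> carrier G \<Longrightarrow> K \<subseteq> carrier G \<Longrightarrow> subgroup (commutator_subgroup G H K) G"
  unfolding csub_alt by (rule generate_is_subgroup) (auto intro!: cm_closed)

lemma lcs_subgroup: "subgroup (lcs_aux G i) G"
proof (induction i)
  case 0 then show ?case by (simp add: subgroup_self)
next
  case (Suc i) then show ?case by (simp add: csub_subgroup subgroup.subset)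
qed

lemma lcs_carrier: "lcs_aux G i \<subseteq> carrier G"
  using lcs_subgroup subgroup.subset by blast

lemma lcs_carrierD: "x \<in> lcs_aux G i \<Longrightarrow> x \<in> carrier G"
  using lcs_carrier by blast

lemma cm_in_lcs: "h \<in> lcs_aux G i \<Longrightarrow> k \<in> carrier G \<Longrightarrow> cm G h k \<in> lcs_aux G (Suc i)"
  by (auto simp: csub_alt intro!: generate.incl)

lemma cm_conj: "g \<in> carrier G \<Longrightarrow> h \<in> carrier G \<Longrightarrow> k \<in> carrier G \<Longrightarrow>
  g \<otimes> cm G h k \<otimes> inv g = cm G (g \<otimes> h \<otimes> inv g) (g \<otimes> k \<otimes> inv g)"
  unfolding cm_def by (simp add: m_assoc inv_mult_group)

lemma lcs_normal: "lcs_aux G i \<lhd> G"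
proof (induction i)
  case 0 then show ?case by (simp add: normal_self)
next
  case (Suc i)
  have "generate G {cm G h k | h k. h \<in> lcs_aux G i \<and> k \<in> carrier G} \<lhd> G"
  proof (rule normal_generateI)
    show "{cm G h k | h k. h \<in> lcs_aux G i \<and> k \<in> carrier G} \<subseteq> carrier G"
      using lcs_carrierD by auto
  next
    fix h g assume h: "h \<in> {cm G h k | h k. h \<in> lcs_aux G i \<and> k \<in> carrier G}" and g: "g \<in> carrier G"
    then obtain x k where x: "x \<in> lcs_aux G i" "k \<in> carrier G" "h = cm G x k" by blast
    have "g \<otimes> x \<otimes> inv g \<in> lcs_aux G i" using Suc x g by (simp add: normal.inv_op_closed2)
    then show "g \<otimes> h \<otimes> inv g \<in> {cm G h k | h k. h \<in> lcs_aux G i \<and> k \<in> carrier G}"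
      using x g cm_conj[of g x k] lcs_carrierD by auto
  qed
  then show ?case by (simp add: csub_alt)
qed

lemma lcs_conj: "x \<in> lcs_aux G i \<Longrightarrow> g \<in> carrier G \<Longrightarrow> g \<otimes> x \<otimes> inv g \<in> lcs_aux G i"
  by (rule normal.inv_op_closed2[OF lcs_normal])

lemma lcs_Suc_sub: "lcs_aux G (Suc i) \<subseteq> lcs_aux G i"
proof -
  have "{cm G h k | h k. h \<in> lcs_aux G i \<and> k \<in> carrier G} \<subseteq> lcs_aux G i"
  proof clarify
    fix h k assume h: "h \<in> lcs_aux G i" and k: "k \<in> carrier G"
    have hc: "h \<in> carrier G" using h lcs_carrierD by blast
    have "k \<otimes> inv h \<otimes> inv k \<in> lcs_aux G i"
      using lcs_conj[OF subgroup.m_inv_closed[OF lcs_subgroup h] k] .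
    then have "h \<otimes> (k \<otimes> inv h \<otimes> inv k) \<in> lcs_aux G i"
      using h by (simp add: subgroup.m_closed[OF lcs_subgroup])
    then show "cm G h k \<in> lcs_aux G i" using hc k by (simp add: cm_def m_assoc)
  qed
  then show ?thesis by (simp add: csub_alt generate_subgroup_incl lcs_subgroup)
qed

lemma lcs_mono: "i \<le> j \<Longrightarrow> lcs_aux G j \<subseteq> lcs_aux G i"
proof (induction j rule: dec_induct)
  case base then show ?case by simp
next
  case (step j) then show ?case using lcs_Suc_sub by blast
qed

lemma inv_cm: "h \<in> carrier G \<Longrightarrow> k \<in> carrier G \<Longrightarrow> inv (cm G h k) = cm G k h"
  unfolding cm_def by (simp add: inv_mult_group m_assoc)

lemma cm_in_lcs': assumes "h \<in> lcs_aux G i" "k \<in> carrier G" shows "cm G k h \<in> lcs_aux G (Suc i)"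
  using assms proof -
  have "inv (cm G h k) \<in> lcs_aux G (Suc i)"
    using cm_in_lcs[OF assms] subgroup.m_inv_closed[OF lcs_subgroup] by blast
  then show ?thesis using inv_cm[of h k] lcs_carrierD assms by auto
qed

end

lemma lcs_hom:
  assumes "group_hom G H f"
  shows "f ` lcs_aux G i \<subseteq> lcs_aux H i \<and> (f ` carrier G = carrier H \<longrightarrow> f ` lcs_aux G i = lcs_aux H i)"
proof (induction i)
  case 0 then show ?case using assms group_hom.hom_closed by fastforce
next
  case (Suc i)
  interpret f: group_hom G H f by (rule assms)
  let ?S = "{cm G h k | h k. h \<in> lcs_aux G i \<and> k \<in> carrier G}"
  have Sc: "?S \<subseteq> carrier G" using f.G.lcs_carrierD by auto
  have img: "f ` ?S = {cm H h k | h k. h \<in> f ` lcs_aux G i \<and> k \<in> f ` carrier G}"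
  proof -
    have "f (cm G h k) = cm H (f h) (f k)" if "h \<in> carrier G" "k \<in> carrier G" for h k
      using that by (simp add: cm_def)
    note fc = this
    show ?thesis
    proof (intro equalityI subsetI)
      fix y assume "y \<in> f ` ?S"
      then obtain h k where hk: "h \<in> lcs_aux G i" "k \<in> carrier G" "y = f (cm G h k)" by blast
      then have "y = cm H (f h) (f k)" using fc f.G.lcs_carrierD by blast
      then show "y \<in> {cm H h k | h k. h \<in> f ` lcs_aux G i \<and> k \<in> f ` carrier G}" using hk by blast
    next
      fix y assume "y \<in> {cm H h k | h k. h \<in> f ` lcs_aux G i \<and> k \<in> f ` carrier G}"
      then obtain h k where hk: "h \<in> lcs_aux G i" "k \<in> carrier G" "y = cm H (f h) (f k)" by blast
      then have "y = f (cm G h k)" using fc f.G.lcs_carrierD by metis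
      then show "y \<in> f ` ?S" using hk by blast
    qed
  qed
  have eq: "f ` lcs_aux G (Suc i) = generate H {cm H h k | h k. h \<in> f ` lcs_aux G i \<and> k \<in> f ` carrier G}"
    using f.generate_img[OF Sc] img by (simp add: csub_alt)
  have "f ` lcs_aux G (Suc i) \<subseteq> lcs_aux H (Suc i)"
  proof -
    have "generate H {cm H h k | h k. h \<in> f ` lcs_aux G i \<and> k \<in> f ` carrier G}
       \<subseteq> generate H {cm H h k | h k. h \<in> lcs_aux H i \<and> k \<in> carrier H}"
      using Suc f.hom_closed by (intro f.H.mono_generate) blast
    then show ?thesis using eq by (simp add: csub_alt)
  qed
  moreover have "f ` carrier G = carrier H \<longrightarrow> f ` lcs_aux G (Suc i) = lcs_aux H (Suc i)"
    using Suc eq by (simp add: csub_alt)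
  ultimately show ?case by blast
qed




lemma hom_hom_mult: "h \<in> hom G H \<Longrightarrow> x \<in> carrier G \<Longrightarrow> y \<in> carrier G \<Longrightarrow> h (x \<otimes>\<^bsub>G\<^esub> y) = h x \<otimes>\<^bsub>H\<^esub> h y"
  by (rule hom_mult)

lemma hom_hom_inv: "group G \<Longrightarrow> group H \<Longrightarrow> h \<in> hom G H \<Longrightarrow> x \<in> carrier G \<Longrightarrow> h (inv\<^bsub>G\<^esub> x) = inv\<^bsub>H\<^esub> (h x)"
  by (simp add: group_hom.hom_inv group_hom_axioms_def group_hom_def)

lemma hom_cm: "group G \<Longrightarrow> group H \<Longrightarrow> h \<in> hom G H \<Longrightarrow> x \<in> carrier G \<Longrightarrow> y \<in> carrier G \<Longrightarrow>
  h (cm G x y) = cm H (h x) (h y)"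
  unfolding cm_def by (simp add: hom_mult hom_hom_inv group.inv_closed monoid.m_closed group.is_monoid)

lemma equalizer_subgroup:
  assumes "group G" "group H" "f \<in> hom G H" "g \<in> hom G H"
  shows "subgroup {x \<in> carrier G. f x = g x} G"
proof -
  interpret G: group G by fact
  interpret H: group H by fact
  show ?thesis
  proof (rule G.subgroupI)
    show "{x \<in> carrier G. f x = g x} \<noteq> {}"
      using hom_one[OF assms(3,1,2)] hom_one[OF assms(4,1,2)] by force
    show "\<And>a. a \<in> {x \<in> carrier G. f x = g x} \<Longrightarrow> inv\<^bsub>G\<^esub> a \<in> {x \<in> carrier G. f x = g x}"
      by (simp add: hom_hom_inv[OF assms(1,2) assms(3)] hom_hom_inv[OF assms(1,2) assms(4)])
    show "\<And>a b. a \<in> {x \<in> carrier G. f x = g x} \<Longrightarrow> b \<in> {x \<in> carrier G. f x = g x} \<Longrightarrow>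
        a \<otimes>\<^bsub>G\<^esub> b \<in> {x \<in> carrier G. f x = g x}"
    proof clarify
      fix a b assume ab: "a \<in> carrier G" "f a = g a" "b \<in> carrier G" "f b = g b"
      have "f (a \<otimes>\<^bsub>G\<^esub> b) = f a \<otimes>\<^bsub>H\<^esub> f b" by (rule hom_mult[OF assms(3) ab(1,3)])
      also have "... = g (a \<otimes>\<^bsub>G\<^esub> b)" using hom_mult[OF assms(4) ab(1,3)] ab by simp
      finally show "a \<otimes>\<^bsub>G\<^esub> b \<in> carrier G \<and> f (a \<otimes>\<^bsub>G\<^esub> b) = g (a \<otimes>\<^bsub>G\<^esub> b)" using ab by simp
    qed
  qed auto
qed

context group begin

lemma quot_group: "N \<lhd> G \<Longrightarrow> group (G Mod N)"
  by (rule normal.factorgroup_is_group)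

lemma quot_hom: "N \<lhd> G \<Longrightarrow> (\<lambda>x. N #> x) \<in> hom G (G Mod N)"
  by (rule normal.r_coset_hom_Mod)

lemma quot_eq_one: assumes "N \<lhd> G" "x \<in> carrier G" shows "(N #> x = N) \<longleftrightarrow> x \<in> N"
proof
  assume "N #> x = N" then show "x \<in> N" using rcos_self[OF assms(2)] assms(1) normal_imp_subgroup by force
next
  assume "x \<in> N" then show "N #> x = N" using coset_join2 assms normal_imp_subgroup by blast
qed

lemma quot_eq: assumes "N \<lhd> G" "x \<in> carrier G" "y \<in> carrier G" shows "(N #> x = N #> y) \<longleftrightarrow> x \<otimes> inv y \<in> N"
proof
  assume "N #> x = N #> y"
  then have "x \<in> N #> y" using rcos_self[OF assms(2)] assms(1) normal_imp_subgroup by force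
  then show "x \<otimes> inv y \<in> N" using subgroup.rcos_module_imp[OF normal_imp_subgroup[OF assms(1)]] assms by blast
next
  assume "x \<otimes> inv y \<in> N"
  then have "x \<in> N #> y" using subgroup.rcos_module_rev[OF normal_imp_subgroup[OF assms(1)]] assms by blast
  then show "N #> x = N #> y" using repr_independence[OF _ assms(3) normal_imp_subgroup[OF assms(1)]] by simp
qed

lemma quot_one: "N \<lhd> G \<Longrightarrow> \<one>\<^bsub>G Mod N\<^esub> = N"
  by simp

end

lemma (in group) gcomp1:
  assumes "U \<in> carrier G" "Z \<in> carrier G" "A \<in> carrier G" "V \<in> carrier G"
    and cen: "\<And>Y. Y \<in> carrier G \<Longrightarrow> U \<otimes> Y = Y \<otimes> U"
    and vx: "V \<otimes> Z = Z \<otimes> V"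
  shows "cm G (U \<otimes> Z) (A \<otimes> V) = cm G Z A"
proof -
  note c = assms(1-4)
  let ?W = "Z \<otimes> (A \<otimes> (V \<otimes> (inv Z \<otimes> (inv V \<otimes> inv A))))"
  have W: "?W \<in> carrier G" using c by simp
  let ?P = "Z \<otimes> (A \<otimes> (V \<otimes> inv Z))" and ?R = "inv V \<otimes> inv A"
  have P: "?P \<in> carrier G" and R: "?R \<in> carrier G" using c by simp_all
  have e1: "cm G (U \<otimes> Z) (A \<otimes> V) = U \<otimes> (?P \<otimes> (inv U \<otimes> ?R))"
    using c by (simp add: cm_def m_assoc inv_mult_group)
  have e2: "U \<otimes> (?P \<otimes> (inv U \<otimes> ?R)) = ?P \<otimes> ?R"
  proof -
    have "U \<otimes> (?P \<otimes> (inv U \<otimes> ?R)) = ((U \<otimes> ?P) \<otimes> inv U) \<otimes> ?R" using c by (simp add: m_assoc)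
    also have "... = ((?P \<otimes> U) \<otimes> inv U) \<otimes> ?R" by (simp only: cen[OF P])
    also have "... = ?P \<otimes> ?R" using P R c by (simp add: m_assoc)
    finally show ?thesis .
  qed
  have e2': "?P \<otimes> ?R = ?W" using c by (simp add: m_assoc)
  have e3: "V \<otimes> (inv Z \<otimes> R) = inv Z \<otimes> (V \<otimes> R)" if "R \<in> carrier G" for R
  proof -
    have "inv Z \<otimes> (V \<otimes> Z) \<otimes> inv Z = inv Z \<otimes> (Z \<otimes> V) \<otimes> inv Z" using vx by simp
    then have "V \<otimes> inv Z = inv Z \<otimes> V" using c by (simp add: m_assoc)
    then show ?thesis using that c by (simp add: m_assoc[symmetric])
  qed
  have e4: "?W = cm G Z A" using c by (simp add: e3 cm_def m_assoc)
  show ?thesis using e1 e2 e2' e4 by simp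
qed




definition lev :: "('a,'b) monoid_scheme \<Rightarrow> nat \<Rightarrow> ('a \<Rightarrow> 'a) \<Rightarrow> bool" where
  "lev G k \<sigma> \<longleftrightarrow> \<sigma> \<in> hom G G \<and> (\<forall>a\<in>carrier G. lcs_aux G k #>\<^bsub>G\<^esub> \<sigma> a = lcs_aux G k #>\<^bsub>G\<^esub> a)"

context group begin

lemma lcs_quot_eq: "x \<in> carrier G \<Longrightarrow> y \<in> carrier G \<Longrightarrow>
   (lcs_aux G i #> x = lcs_aux G i #> y) \<longleftrightarrow> x \<otimes> inv y \<in> lcs_aux G i"
  by (rule quot_eq[OF lcs_normal])

lemma inner_lev:
  assumes v: "v \<in> lcs_aux G k"
  shows "lev G (Suc k) (\<lambda>z. v \<otimes> z \<otimes> inv v)"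
proof -
  have vc: "v \<in> carrier G" using v lcs_carrierD by blast
  have "(\<lambda>z. v \<otimes> z \<otimes> inv v) \<in> hom G G"
    unfolding hom_def using vc by (auto simp: m_assoc)
  moreover have "lcs_aux G (Suc k) #> (v \<otimes> a \<otimes> inv v) = lcs_aux G (Suc k) #> a" if a: "a \<in> carrier G" for a
  proof -
    have "(v \<otimes> a \<otimes> inv v) \<otimes> inv a = cm G v a" using vc a by (simp add: cm_def)
    then show ?thesis using lcs_quot_eq[of "v \<otimes> a \<otimes> inv v" a "Suc k"] cm_in_lcs[OF v a] vc a by simp
  qed
  ultimately show ?thesis by (simp add: lev_def)
qed

lemma level_main:
  "\<forall>k \<sigma>. lev G k \<sigma> \<longrightarrow> (\<forall>x\<in>lcs_aux G m. lcs_aux G (m+k) #> \<sigma> x = lcs_aux G (m+k) #> x)"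
proof (induction m)
  case 0 show ?case by (simp add: lev_def)
next
  case (Suc m)
  show ?case
  proof (intro allI impI ballI)
    fix k \<sigma> x assume lv: "lev G k \<sigma>" and x: "x \<in> lcs_aux G (Suc m)"
    define N where "N = lcs_aux G (Suc (m+k))"
    have Nn: "N \<lhd> G" unfolding N_def by (rule lcs_normal)
    define q where "q = (\<lambda>y. N #> y)"
    have sh: "\<sigma> \<in> hom G G" using lv lev_def by auto
    have qh: "q \<in> hom G (G Mod N)" unfolding q_def by (rule quot_hom[OF Nn])
    have qsh: "q \<circ> \<sigma> \<in> hom G (G Mod N)" by (rule Group.hom_compose[OF sh qh])
    have QG: "group (G Mod N)" by (rule quot_group[OF Nn])
    interpret Q: group "G Mod N" by (rule QG)
    have S: "subgroup {y \<in> carrier G. (q \<circ> \<sigma>) y = q y} G"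
      by (rule equalizer_subgroup[OF is_group QG qsh qh])
    have gens: "{cm G h k | h k. h \<in> lcs_aux G m \<and> k \<in> carrier G} \<subseteq> {y \<in> carrier G. (q \<circ> \<sigma>) y = q y}"
    proof clarify
      fix y a assume y: "y \<in> lcs_aux G m" and a: "a \<in> carrier G"
      have yc: "y \<in> carrier G" by (rule lcs_carrierD[OF y])
      have sy: "\<sigma> y \<in> carrier G" "\<sigma> a \<in> carrier G" by (rule hom_in_carrier[OF sh yc], rule hom_in_carrier[OF sh a])
      define u where "u = \<sigma> y \<otimes> inv y"
      have "lcs_aux G (m+k) #> \<sigma> y = lcs_aux G (m+k) #> y" by (rule Suc.IH[rule_format, OF lv y])
      then have u: "u \<in> lcs_aux G (m+k)"
        using lcs_quot_eq[OF sy(1) yc] u_def by simp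
      define v where "v = inv a \<otimes> \<sigma> a"
      have "lcs_aux G k #> \<sigma> a = lcs_aux G k #> a" using lv a by (simp add: lev_def)
      then have "\<sigma> a \<otimes> inv a \<in> lcs_aux G k" using lcs_quot_eq[OF sy(2) a] by simp
      then have "inv a \<otimes> (\<sigma> a \<otimes> inv a) \<otimes> inv (inv a) \<in> lcs_aux G k"
        by (rule lcs_conj[OF _ inv_closed[OF a]])
      then have v: "v \<in> lcs_aux G k" using a sy by (simp add: v_def m_assoc)
      have uc: "u \<in> carrier G" by (rule lcs_carrierD[OF u])
      have vc: "v \<in> carrier G" by (rule lcs_carrierD[OF v])
      have syu: "\<sigma> y = u \<otimes> y" using u_def yc sy by (simp add: m_assoc)
      have sav: "\<sigma> a = a \<otimes> v" using v_def a sy by (simp add: m_assoc[symmetric])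
      have "lcs_aux G (m + Suc k) #> (v \<otimes> y \<otimes> inv v) = lcs_aux G (m + Suc k) #> y"
        by (rule Suc.IH[rule_format, OF inner_lev[OF v] y])
      then have comm1: "q (v \<otimes> y \<otimes> inv v) = q y" by (simp add: N_def q_def)
      have qm: "q (g \<otimes> h) = q g \<otimes>\<^bsub>G Mod N\<^esub> q h" if "g \<in> carrier G" "h \<in> carrier G" for g h
        using hom_mult[OF qh that] .
      have qi: "q (inv g) = inv\<^bsub>G Mod N\<^esub> q g" if "g \<in> carrier G" for g
        using hom_hom_inv[OF is_group QG qh that] .
      have qc: "q g \<in> carrier (G Mod N)" if "g \<in> carrier G" for g
        using hom_in_carrier[OF qh that] .
      have cen: "q u \<otimes>\<^bsub>G Mod N\<^esub> Y = Y \<otimes>\<^bsub>G Mod N\<^esub> q u" if Y: "Y \<in> carrier (G Mod N)" for Y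
      proof -
        obtain g where g: "g \<in> carrier G" "Y = q g" using Y unfolding carrier_FactGroup q_def by blast
        have "(u \<otimes> g) \<otimes> inv (g \<otimes> u) = cm G u g" using uc g by (simp add: cm_def m_assoc inv_mult_group)
        then have "q (u \<otimes> g) = q (g \<otimes> u)"
          using quot_eq[OF Nn, of "u \<otimes> g" "g \<otimes> u"] cm_in_lcs[OF u g(1)] uc g by (simp add: q_def N_def)
        then show ?thesis using g qm uc by simp
      qed
      have vx: "q v \<otimes>\<^bsub>G Mod N\<^esub> q y = q y \<otimes>\<^bsub>G Mod N\<^esub> q v"
      proof -
        have "q y = (q v \<otimes>\<^bsub>G Mod N\<^esub> q y) \<otimes>\<^bsub>G Mod N\<^esub> inv\<^bsub>G Mod N\<^esub> q v"
          using comm1 qm qi vc yc by simp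
        then show ?thesis using Q.inv_solve_right[OF qc[OF yc] Q.m_closed[OF qc[OF vc] qc[OF yc]] qc[OF vc]] by simp
      qed
      have "q (\<sigma> (cm G y a)) = q (cm G (u \<otimes> y) (a \<otimes> v))"
        using hom_cm[OF is_group is_group sh yc a] syu sav by simp
      also have "... = cm (G Mod N) (q u \<otimes>\<^bsub>G Mod N\<^esub> q y) (q a \<otimes>\<^bsub>G Mod N\<^esub> q v)"
        using hom_cm[OF is_group QG qh] uc yc a vc qm by simp
      also have "... = cm (G Mod N) (q y) (q a)"
        by (rule Q.gcomp1[OF qc[OF uc] qc[OF yc] qc[OF a] qc[OF vc] cen vx])
      also have "... = q (cm G y a)"
        using hom_cm[OF is_group QG qh yc a] by simp
      finally show "cm G y a \<in> carrier G \<and> (q \<circ> \<sigma>) (cm G y a) = q (cm G y a)" using yc a by simp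
    qed
    have "lcs_aux G (Suc m) \<subseteq> {y \<in> carrier G. (q \<circ> \<sigma>) y = q y}"
      using generate_subgroup_incl[OF gens S] by (simp add: csub_alt)
    then show "lcs_aux G (Suc m + k) #> \<sigma> x = lcs_aux G (Suc m + k) #> x"
      using x by (auto simp: N_def q_def)
  qed
qed

lemma level:
  "lev G k \<sigma> \<Longrightarrow> x \<in> lcs_aux G m \<Longrightarrow> lcs_aux G (m+k) #> \<sigma> x = lcs_aux G (m+k) #> x"
  using level_main by blast

end



lemma derived_lcs1: "derived G (carrier G) = lcs_aux G 1"
proof -
  have "derived_set G (carrier G) = {h \<otimes>\<^bsub>G\<^esub> k \<otimes>\<^bsub>G\<^esub> inv\<^bsub>G\<^esub> h \<otimes>\<^bsub>G\<^esub> inv\<^bsub>G\<^esub> k | h k. h \<in> carrier G \<and> k \<in> carrier G}"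
    by blast
  then show ?thesis by (simp add: derived_def commutator_subgroup_def)
qed

lemma (in group) lev_conj:
  assumes "lev G k \<sigma>" "y \<in> carrier G"
  shows "inv y \<otimes> \<sigma> y \<in> lcs_aux G k" "\<sigma> y = y \<otimes> (inv y \<otimes> \<sigma> y)" "\<sigma> y \<in> carrier G"
proof -
  have sh: "\<sigma> \<in> hom G G" using assms(1) by (simp add: lev_def)
  show sy: "\<sigma> y \<in> carrier G" by (rule hom_in_carrier[OF sh assms(2)])
  have "lcs_aux G k #> \<sigma> y = lcs_aux G k #> y" using assms by (simp add: lev_def)
  then have "\<sigma> y \<otimes> inv y \<in> lcs_aux G k" using lcs_quot_eq[OF sy assms(2)] by simp
  then have "inv y \<otimes> (\<sigma> y \<otimes> inv y) \<otimes> inv (inv y) \<in> lcs_aux G k"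
    by (rule lcs_conj[OF _ inv_closed[OF assms(2)]])
  then show "inv y \<otimes> \<sigma> y \<in> lcs_aux G k" using sy assms(2) by (simp add: m_assoc)
  show "\<sigma> y = y \<otimes> (inv y \<otimes> \<sigma> y)" using sy assms(2) by simp
qed

lemma (in group) lev_commute:
  assumes s: "lev G k \<sigma>" and t: "lev G 1 \<tau>" and y: "y \<in> carrier G"
  shows "lcs_aux G (Suc k) #> \<sigma> (\<tau> y) = lcs_aux G (Suc k) #> \<tau> (\<sigma> y)"
proof -
  define N where "N = lcs_aux G (Suc k)"
  have Nn: "N \<lhd> G" unfolding N_def by (rule lcs_normal)
  define q where "q = (\<lambda>y. N #> y)"
  have qh: "q \<in> hom G (G Mod N)" unfolding q_def by (rule quot_hom[OF Nn])
  have QG: "group (G Mod N)" by (rule quot_group[OF Nn])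
  interpret Q: group "G Mod N" by (rule QG)
  have qm: "q (g \<otimes> h) = q g \<otimes>\<^bsub>G Mod N\<^esub> q h" if "g \<in> carrier G" "h \<in> carrier G" for g h
    using hom_mult[OF qh that] .
  have qc: "q g \<in> carrier (G Mod N)" if "g \<in> carrier G" for g
    using hom_in_carrier[OF qh that] .
  have sh: "\<sigma> \<in> hom G G" using s by (simp add: lev_def)
  have th: "\<tau> \<in> hom G G" using t by (simp add: lev_def)
  define sv where "sv = inv y \<otimes> \<sigma> y"
  define tv where "tv = inv y \<otimes> \<tau> y"
  have svl: "sv \<in> lcs_aux G k" and tvl: "tv \<in> lcs_aux G 1"
    using lev_conj(1)[OF s y] lev_conj(1)[OF t y] by (simp_all add: sv_def tv_def)
  have svc: "sv \<in> carrier G" by (rule lcs_carrierD[OF svl])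
  have tvc: "tv \<in> carrier G" by (rule lcs_carrierD[OF tvl])
  have sy: "\<sigma> y = y \<otimes> sv" using lev_conj(2)[OF s y] by (simp add: sv_def)
  have ty: "\<tau> y = y \<otimes> tv" using lev_conj(2)[OF t y] by (simp add: tv_def)
  have stc: "\<sigma> tv \<in> carrier G" by (rule hom_in_carrier[OF sh tvc])
  have tsc: "\<tau> sv \<in> carrier G" by (rule hom_in_carrier[OF th svc])
  have e1: "q (\<sigma> tv) = q tv"
    using level[OF s tvl] by (simp add: q_def N_def)
  have e2: "q (\<tau> sv) = q sv"
    using level[OF t svl] by (simp add: q_def N_def)
  have e3: "q (sv \<otimes> tv) = q (tv \<otimes> sv)"
  proof -
    have "(sv \<otimes> tv) \<otimes> inv (tv \<otimes> sv) = cm G sv tv" using svc tvc by (simp add: cm_def m_assoc inv_mult_group)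
    then show ?thesis
      using quot_eq[OF Nn, of "sv \<otimes> tv" "tv \<otimes> sv"] cm_in_lcs[OF svl tvc] svc tvc by (simp add: q_def N_def)
  qed
  have "q (\<sigma> (\<tau> y)) = q y \<otimes>\<^bsub>G Mod N\<^esub> q (sv \<otimes> tv)"
  proof -
    have "\<sigma> (\<tau> y) = y \<otimes> sv \<otimes> \<sigma> tv" using ty sy hom_mult[OF sh y tvc] by simp
    then show ?thesis using qm e1 y svc tvc stc by (simp del: mult_FactGroup add: Q.m_assoc qc)
  qed
  also have "... = q y \<otimes>\<^bsub>G Mod N\<^esub> q (tv \<otimes> sv)" by (simp add: e3)
  also have "... = q (\<tau> (\<sigma> y))"
  proof -
    have "\<tau> (\<sigma> y) = y \<otimes> tv \<otimes> \<tau> sv" using ty sy hom_mult[OF th y svc] by simp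
    then show ?thesis using qm e2 y svc tvc tsc by (simp del: mult_FactGroup add: Q.m_assoc qc)
  qed
  finally show ?thesis by (simp add: q_def N_def)
qed

lemma (in group) lev_mono: "lev G k \<sigma> \<Longrightarrow> j \<le> k \<Longrightarrow> lev G j \<sigma>"
proof -
  assume a: "lev G k \<sigma>" "j \<le> k"
  have sh: "\<sigma> \<in> hom G G" using a by (simp add: lev_def)
  have "lcs_aux G j #> \<sigma> x = lcs_aux G j #> x" if x: "x \<in> carrier G" for x
  proof -
    have sx: "\<sigma> x \<in> carrier G" by (rule hom_in_carrier[OF sh x])
    have "lcs_aux G k #> \<sigma> x = lcs_aux G k #> x" using a x by (simp add: lev_def)
    then have "\<sigma> x \<otimes> inv x \<in> lcs_aux G k" using lcs_quot_eq[OF sx x] by simp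
    then have "\<sigma> x \<otimes> inv x \<in> lcs_aux G j" using lcs_mono[OF a(2)] by blast
    then show ?thesis using lcs_quot_eq[OF sx x] by simp
  qed
  then show ?thesis using sh by (simp add: lev_def)
qed




locale sdp = A: group A + C: group C for A :: "('a, 'x) monoid_scheme" and C :: "('c, 'y) monoid_scheme" +
  fixes \<phi> :: "'c \<Rightarrow> 'a \<Rightarrow> 'a"
  assumes phi_hom: "\<phi> \<in> hom C (AutoGroup A)"
    and triv: "\<And>c a. c \<in> carrier C \<Longrightarrow> a \<in> carrier A \<Longrightarrow>
           derived A (carrier A) #>\<^bsub>A\<^esub> (\<phi> c a) = derived A (carrier A) #>\<^bsub>A\<^esub> a"
begin

abbreviation "G \<equiv> semidirect_product A C \<phi>"

lemma phi_auto: "c \<in> carrier C \<Longrightarrow> \<phi> c \<in> auto A"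
  using hom_in_carrier[OF phi_hom] by (simp add: AutoGroup_def BijGroup_def)

lemma phi_homA: "c \<in> carrier C \<Longrightarrow> \<phi> c \<in> hom A A"
  using phi_auto by (simp add: auto_def)

lemma phi_Bij: "c \<in> carrier C \<Longrightarrow> \<phi> c \<in> Bij (carrier A)"
  using phi_auto by (simp add: auto_def)

lemma phi_group_hom: "c \<in> carrier C \<Longrightarrow> group_hom A A (\<phi> c)"
  using phi_homA by (simp add: group_hom_def group_hom_axioms_def A.is_group)

lemma phi_closed[simp]: "c \<in> carrier C \<Longrightarrow> a \<in> carrier A \<Longrightarrow> \<phi> c a \<in> carrier A"
  using hom_in_carrier[OF phi_homA] by blast

lemma phi_mult_A[simp]: "c \<in> carrier C \<Longrightarrow> a \<in> carrier A \<Longrightarrow> b \<in> carrier A \<Longrightarrow>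
    \<phi> c (a \<otimes>\<^bsub>A\<^esub> b) = \<phi> c a \<otimes>\<^bsub>A\<^esub> \<phi> c b"
  using hom_mult[OF phi_homA] by blast

lemma phi_inv_A[simp]: "c \<in> carrier C \<Longrightarrow> a \<in> carrier A \<Longrightarrow> \<phi> c (inv\<^bsub>A\<^esub> a) = inv\<^bsub>A\<^esub> (\<phi> c a)"
  using group_hom.hom_inv[OF phi_group_hom] by blast

lemma phi_one_A[simp]: "c \<in> carrier C \<Longrightarrow> \<phi> c \<one>\<^bsub>A\<^esub> = \<one>\<^bsub>A\<^esub>"
  using group_hom.hom_one[OF phi_group_hom] by blast

lemma phi_mult[simp]: "c \<in> carrier C \<Longrightarrow> d \<in> carrier C \<Longrightarrow> a \<in> carrier A \<Longrightarrow>
    \<phi> (c \<otimes>\<^bsub>C\<^esub> d) a = \<phi> c (\<phi> d a)"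
proof -
  assume cd: "c \<in> carrier C" "d \<in> carrier C" and a: "a \<in> carrier A"
  have "\<phi> (c \<otimes>\<^bsub>C\<^esub> d) = \<phi> c \<otimes>\<^bsub>AutoGroup A\<^esub> \<phi> d" using hom_mult[OF phi_hom cd] .
  also have "... = compose (carrier A) (\<phi> c) (\<phi> d)"
    using phi_Bij[OF cd(1)] phi_Bij[OF cd(2)] by (simp add: AutoGroup_def BijGroup_def)
  finally show ?thesis using a by (simp add: compose_def)
qed

lemma phi_one[simp]: "a \<in> carrier A \<Longrightarrow> \<phi> \<one>\<^bsub>C\<^esub> a = a"
proof -
  assume a: "a \<in> carrier A"
  have "\<phi> \<one>\<^bsub>C\<^esub> = \<one>\<^bsub>AutoGroup A\<^esub>"
    using hom_one[OF phi_hom C.is_group A.AutoGroup] .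
  then show ?thesis using a by (simp add: AutoGroup_def BijGroup_def)
qed

lemma phi_inv_cancel[simp]: "c \<in> carrier C \<Longrightarrow> a \<in> carrier A \<Longrightarrow> \<phi> (inv\<^bsub>C\<^esub> c) (\<phi> c a) = a"
  using phi_mult[of "inv\<^bsub>C\<^esub> c" c a] by simp

lemma phi_inv_cancel'[simp]: "c \<in> carrier C \<Longrightarrow> a \<in> carrier A \<Longrightarrow> \<phi> c (\<phi> (inv\<^bsub>C\<^esub> c) a) = a"
  using phi_mult[of c "inv\<^bsub>C\<^esub> c" a] by simp

lemma carrier_G[simp]: "carrier G = carrier A \<times> carrier C"
  by (simp add: semidirect_product_def)

lemma mult_G[simp]: "(a, c) \<otimes>\<^bsub>G\<^esub> (b, d) = (a \<otimes>\<^bsub>A\<^esub> \<phi> c b, c \<otimes>\<^bsub>C\<^esub> d)"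
  by (simp add: semidirect_product_def)

lemma one_G[simp]: "\<one>\<^bsub>G\<^esub> = (\<one>\<^bsub>A\<^esub>, \<one>\<^bsub>C\<^esub>)"
  by (simp add: semidirect_product_def)

lemma group_G: "group G"
proof (rule groupI)
  show "\<And>x y. x \<in> carrier G \<Longrightarrow> y \<in> carrier G \<Longrightarrow> x \<otimes>\<^bsub>G\<^esub> y \<in> carrier G" by auto
  show "\<one>\<^bsub>G\<^esub> \<in> carrier G" by simp
  show "\<And>x y z. x \<in> carrier G \<Longrightarrow> y \<in> carrier G \<Longrightarrow> z \<in> carrier G \<Longrightarrow>
      x \<otimes>\<^bsub>G\<^esub> y \<otimes>\<^bsub>G\<^esub> z = x \<otimes>\<^bsub>G\<^esub> (y \<otimes>\<^bsub>G\<^esub> z)"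
    by (auto simp: A.m_assoc C.m_assoc)
  show "\<And>x. x \<in> carrier G \<Longrightarrow> \<one>\<^bsub>G\<^esub> \<otimes>\<^bsub>G\<^esub> x = x" by auto
  show "\<And>x. x \<in> carrier G \<Longrightarrow> \<exists>y\<in>carrier G. y \<otimes>\<^bsub>G\<^esub> x = \<one>\<^bsub>G\<^esub>"
  proof -
    fix x assume "x \<in> carrier G"
    then obtain a c where x: "x = (a, c)" "a \<in> carrier A" "c \<in> carrier C" by auto
    show "\<exists>y\<in>carrier G. y \<otimes>\<^bsub>G\<^esub> x = \<one>\<^bsub>G\<^esub>"
      by (rule bexI[of _ "(\<phi> (inv\<^bsub>C\<^esub> c) (inv\<^bsub>A\<^esub> a), inv\<^bsub>C\<^esub> c)"]) (use x in simp_all)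
  qed
qed

sublocale G: group G by (rule group_G)

lemma inv_G[simp]: "a \<in> carrier A \<Longrightarrow> c \<in> carrier C \<Longrightarrow>
   inv\<^bsub>G\<^esub> (a, c) = (\<phi> (inv\<^bsub>C\<^esub> c) (inv\<^bsub>A\<^esub> a), inv\<^bsub>C\<^esub> c)"
  by (rule G.inv_equality) simp_all

lemma iA_hom: "(\<lambda>a. (a, \<one>\<^bsub>C\<^esub>)) \<in> hom A G"
  by (auto simp: hom_def)

lemma iC_hom: "(\<lambda>c. (\<one>\<^bsub>A\<^esub>, c)) \<in> hom C G"
  by (auto simp: hom_def)

lemma pC_hom: "snd \<in> hom G C"
  by (auto simp: hom_def)

lemma lev1: "c \<in> carrier C \<Longrightarrow> lev A 1 (\<phi> c)"
  using triv phi_homA by (simp add: lev_def derived_lcs1)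

lemma phi_lcs: "c \<in> carrier C \<Longrightarrow> x \<in> lcs_aux A i \<Longrightarrow> \<phi> c x \<in> lcs_aux A i"
  using lcs_hom[OF phi_group_hom] by blast

end



context sdp begin

lemma C_lev: "c \<in> lcs_aux C j \<Longrightarrow> lev A (Suc j) (\<phi> c)"
proof (induction j arbitrary: c)
  case 0 then show ?case using lev1 by simp
next
  case (Suc j)
  define N where "N = lcs_aux A (Suc (Suc j))"
  define S where "S = {c \<in> carrier C. \<forall>a\<in>carrier A. N #>\<^bsub>A\<^esub> \<phi> c a = N #>\<^bsub>A\<^esub> a}"
  have S: "subgroup S C"
  proof (rule C.subgroupI)
    show "S \<subseteq> carrier C" by (auto simp: S_def)
    show "S \<noteq> {}" using phi_one unfolding S_def by force
  next
    fix c assume c: "c \<in> S"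
    have cc: "c \<in> carrier C" using c S_def by simp
    have "N #>\<^bsub>A\<^esub> \<phi> (inv\<^bsub>C\<^esub> c) a = N #>\<^bsub>A\<^esub> a" if a: "a \<in> carrier A" for a
    proof -
      have all: "\<forall>a\<in>carrier A. N #>\<^bsub>A\<^esub> \<phi> c a = N #>\<^bsub>A\<^esub> a" using c S_def by simp
      have "N #>\<^bsub>A\<^esub> a = N #>\<^bsub>A\<^esub> \<phi> (inv\<^bsub>C\<^esub> c) a"
        using bspec[OF all, of "\<phi> (inv\<^bsub>C\<^esub> c) a"] a cc by simp
      then show ?thesis by simp
    qed
    then show "inv\<^bsub>C\<^esub> c \<in> S" using cc unfolding S_def by simp
  next
    fix c d assume c: "c \<in> S" and d: "d \<in> S"
    have cc: "c \<in> carrier C" and dc: "d \<in> carrier C" using c d S_def by simp_all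
    have "N #>\<^bsub>A\<^esub> \<phi> (c \<otimes>\<^bsub>C\<^esub> d) a = N #>\<^bsub>A\<^esub> a" if a: "a \<in> carrier A" for a
    proof -
      have "N #>\<^bsub>A\<^esub> \<phi> c (\<phi> d a) = N #>\<^bsub>A\<^esub> \<phi> d a" using c a dc unfolding S_def by simp
      also have "... = N #>\<^bsub>A\<^esub> a" using d a unfolding S_def by simp
      finally show ?thesis using cc dc a by simp
    qed
    then show "c \<otimes>\<^bsub>C\<^esub> d \<in> S" using cc dc unfolding S_def by simp
  qed
  have gens: "{cm C h k | h k. h \<in> lcs_aux C j \<and> k \<in> carrier C} \<subseteq> S"
  proof clarify
    fix c d assume c: "c \<in> lcs_aux C j" and d: "d \<in> carrier C"
    have cc: "c \<in> carrier C" by (rule C.lcs_carrierD[OF c])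
    have "N #>\<^bsub>A\<^esub> \<phi> (cm C c d) a = N #>\<^bsub>A\<^esub> a" if a: "a \<in> carrier A" for a
    proof -
      define y where "y = \<phi> (inv\<^bsub>C\<^esub> c) (\<phi> (inv\<^bsub>C\<^esub> d) a)"
      have y: "y \<in> carrier A" using y_def cc d a by simp
      have e1: "\<phi> (cm C c d) a = \<phi> c (\<phi> d y)" using cc d a by (simp add: cm_def y_def)
      have e2: "\<phi> d (\<phi> c y) = a" using cc d a by (simp add: y_def)
      have "N #>\<^bsub>A\<^esub> \<phi> c (\<phi> d y) = N #>\<^bsub>A\<^esub> \<phi> d (\<phi> c y)"
        unfolding N_def by (rule A.lev_commute[OF Suc.IH[OF c] lev1[OF d] y])
      then show ?thesis using e1 e2 by simp
    qed
    then show "cm C c d \<in> S" using cc d unfolding S_def by simp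
  qed
  have "lcs_aux C (Suc j) \<subseteq> S"
    using C.generate_subgroup_incl[OF gens S] by (simp add: csub_alt)
  then have "c \<in> S" using Suc.prems by blast
  then show ?case unfolding lev_def S_def N_def using phi_homA by simp
qed

lemma lcs_G_sup: "lcs_aux A i \<times> lcs_aux C i \<subseteq> lcs_aux G i"
proof clarify
  fix a c assume a: "a \<in> lcs_aux A i" and c: "c \<in> lcs_aux C i"
  have gA: "group_hom A G (\<lambda>a. (a, \<one>\<^bsub>C\<^esub>))"
    by (simp add: group_hom_def group_hom_axioms_def A.is_group G.is_group iA_hom)
  have gC: "group_hom C G (\<lambda>c. (\<one>\<^bsub>A\<^esub>, c))"
    by (simp add: group_hom_def group_hom_axioms_def C.is_group G.is_group iC_hom)
  have "(a, \<one>\<^bsub>C\<^esub>) \<in> lcs_aux G i" using lcs_hom[OF gA, of i] a by blast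
  moreover have "(\<one>\<^bsub>A\<^esub>, c) \<in> lcs_aux G i" using lcs_hom[OF gC, of i] c by blast
  ultimately have "(a, \<one>\<^bsub>C\<^esub>) \<otimes>\<^bsub>G\<^esub> (\<one>\<^bsub>A\<^esub>, c) \<in> lcs_aux G i"
    using subgroup.m_closed[OF G.lcs_subgroup] by blast
  moreover have "(a, \<one>\<^bsub>C\<^esub>) \<otimes>\<^bsub>G\<^esub> (\<one>\<^bsub>A\<^esub>, c) = (a, c)"
    using A.lcs_carrierD[OF a] C.lcs_carrierD[OF c] by simp
  ultimately show "(a, c) \<in> lcs_aux G i" by simp
qed

lemma lcs_G_sub: "lcs_aux G i \<subseteq> lcs_aux A i \<times> lcs_aux C i"
proof (induction i)
  case 0 then show ?case by simp
next
  case (Suc i)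
  define P where "P = lcs_aux A (Suc i) \<times> lcs_aux C (Suc i)"
  have SA: "subgroup (lcs_aux A (Suc i)) A" by (rule A.lcs_subgroup)
  have SC: "subgroup (lcs_aux C (Suc i)) C" by (rule C.lcs_subgroup)
  have P: "subgroup P G"
  proof (rule G.subgroupI)
    show "P \<subseteq> carrier G" unfolding P_def using A.lcs_carrier[of "Suc i"] C.lcs_carrier[of "Suc i"] by auto
    show "P \<noteq> {}" using subgroup.one_closed[OF SA] subgroup.one_closed[OF SC] by (auto simp: P_def)
  next
    fix x assume "x \<in> P"
    then obtain a c where x: "x = (a, c)" "a \<in> lcs_aux A (Suc i)" "c \<in> lcs_aux C (Suc i)" by (auto simp: P_def)
    have ac: "a \<in> carrier A" "c \<in> carrier C" using A.lcs_carrierD[OF x(2)] C.lcs_carrierD[OF x(3)] by auto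
    have "\<phi> (inv\<^bsub>C\<^esub> c) (inv\<^bsub>A\<^esub> a) \<in> lcs_aux A (Suc i)"
      using phi_lcs[OF C.inv_closed[OF ac(2)] subgroup.m_inv_closed[OF SA x(2)]] .
    then show "inv\<^bsub>G\<^esub> x \<in> P" using x ac subgroup.m_inv_closed[OF SC x(3)] by (simp add: P_def)
  next
    fix x y assume "x \<in> P" "y \<in> P"
    then obtain a c b d where x: "x = (a, c)" "a \<in> lcs_aux A (Suc i)" "c \<in> lcs_aux C (Suc i)"
      and y: "y = (b, d)" "b \<in> lcs_aux A (Suc i)" "d \<in> lcs_aux C (Suc i)" by (auto simp: P_def)
    have ac: "c \<in> carrier C" using C.lcs_carrierD[OF x(3)] by auto
    have "a \<otimes>\<^bsub>A\<^esub> \<phi> c b \<in> lcs_aux A (Suc i)"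
      using subgroup.m_closed[OF SA x(2) phi_lcs[OF ac y(2)]] .
    then show "x \<otimes>\<^bsub>G\<^esub> y \<in> P" using x y subgroup.m_closed[OF SC x(3) y(3)] by (simp add: P_def)
  qed
  define N where "N = lcs_aux A (Suc i)"
  have Nn: "N \<lhd> A" unfolding N_def by (rule A.lcs_normal)
  define q where "q = (\<lambda>y. N #>\<^bsub>A\<^esub> y)"
  have qh: "q \<in> hom A (A Mod N)" unfolding q_def by (rule A.quot_hom[OF Nn])
  interpret Q: group "A Mod N" by (rule A.quot_group[OF Nn])
  have qm: "q (g \<otimes>\<^bsub>A\<^esub> h) = q g \<otimes>\<^bsub>A Mod N\<^esub> q h" if "g \<in> carrier A" "h \<in> carrier A" for g h
    using hom_mult[OF qh that] .
  have qc: "q g \<in> carrier (A Mod N)" if "g \<in> carrier A" for g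
    using hom_in_carrier[OF qh that] .
  have gens: "{cm G h k | h k. h \<in> lcs_aux G i \<and> k \<in> carrier G} \<subseteq> P"
  proof (rule subsetI)
    fix x assume "x \<in> {cm G h k | h k. h \<in> lcs_aux G i \<and> k \<in> carrier G}"
    then obtain g h where g: "g \<in> lcs_aux G i" and h: "h \<in> carrier G" and xgh: "x = cm G g h" by blast
    obtain a c where gac: "g = (a, c)" and a: "a \<in> lcs_aux A i" and c: "c \<in> lcs_aux C i"
      using g Suc.IH by blast
    obtain b d where hbd: "h = (b, d)" and b: "b \<in> carrier A" and d: "d \<in> carrier C"
      using h by auto
    have ac: "a \<in> carrier A" by (rule A.lcs_carrierD[OF a])
    have cc: "c \<in> carrier C" by (rule C.lcs_carrierD[OF c])
    define z where "z = \<phi> (inv\<^bsub>C\<^esub> c) (inv\<^bsub>A\<^esub> a)"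
    have zl: "z \<in> lcs_aux A i"
      unfolding z_def using phi_lcs[OF C.inv_closed[OF cc] subgroup.m_inv_closed[OF A.lcs_subgroup a]] .
    have zc: "z \<in> carrier A" by (rule A.lcs_carrierD[OF zl])
    have cmG: "cm G (a, c) (b, d) =
      (a \<otimes>\<^bsub>A\<^esub> \<phi> c b \<otimes>\<^bsub>A\<^esub> \<phi> (c \<otimes>\<^bsub>C\<^esub> d) z \<otimes>\<^bsub>A\<^esub> \<phi> (cm C c d) (inv\<^bsub>A\<^esub> b), cm C c d)"
      using ac cc b d by (simp add: cm_def z_def)
    have cdl: "cm C c d \<in> lcs_aux C (Suc i)" by (rule C.cm_in_lcs[OF c d])
    have cdl': "cm C c d \<in> lcs_aux C i" using cdl C.lcs_Suc_sub by blast
    have cdc: "cm C c d \<in> carrier C" by (rule C.lcs_carrierD[OF cdl])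
    have e1: "q (\<phi> c b) = q b"
      using C_lev[OF c] b unfolding lev_def q_def N_def by simp
    have e2: "q (\<phi> (c \<otimes>\<^bsub>C\<^esub> d) z) = q (inv\<^bsub>A\<^esub> a)"
    proof -
      have "q (\<phi> (c \<otimes>\<^bsub>C\<^esub> d) z) = q z"
        using A.level[OF lev1[OF C.m_closed[OF cc d]] zl] by (simp add: q_def N_def)
      also have "... = q (inv\<^bsub>A\<^esub> a)"
        using A.level[OF lev1[OF C.inv_closed[OF cc]] subgroup.m_inv_closed[OF A.lcs_subgroup a]]
        by (simp add: q_def N_def z_def)
      finally show ?thesis .
    qed
    have e3: "q (\<phi> (cm C c d) (inv\<^bsub>A\<^esub> b)) = q (inv\<^bsub>A\<^esub> b)"
      using C_lev[OF cdl'] b unfolding lev_def q_def N_def by simp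
    have "q (a \<otimes>\<^bsub>A\<^esub> \<phi> c b \<otimes>\<^bsub>A\<^esub> \<phi> (c \<otimes>\<^bsub>C\<^esub> d) z \<otimes>\<^bsub>A\<^esub> \<phi> (cm C c d) (inv\<^bsub>A\<^esub> b))
        = q (cm A a b)"
      using ac b cc d zc cdc e1 e2 e3
      by (simp del: mult_FactGroup phi_mult phi_inv_A add: qm cm_def)
    also have "... = N" unfolding q_def
      using A.quot_eq_one[OF Nn] A.cm_in_lcs[OF a b] ac b by (simp add: N_def)
    finally have "a \<otimes>\<^bsub>A\<^esub> \<phi> c b \<otimes>\<^bsub>A\<^esub> \<phi> (c \<otimes>\<^bsub>C\<^esub> d) z \<otimes>\<^bsub>A\<^esub> \<phi> (cm C c d) (inv\<^bsub>A\<^esub> b) \<in> N"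
      unfolding q_def using A.quot_eq_one[OF Nn] ac b cc d zc cdc by simp
    then show "x \<in> P" using xgh gac hbd cmG cdl by (simp add: P_def N_def)
  qed
  show ?case
    using G.generate_subgroup_incl[OF gens P] by (simp add: csub_alt P_def)
qed

lemma lcs_G: "lcs_aux G i = lcs_aux A i \<times> lcs_aux C i"
  using lcs_G_sub lcs_G_sup by blast

end



context group begin

lemma sub_pow: "subgroup S G \<Longrightarrow> x \<in> S \<Longrightarrow> x [^] (n::nat) \<in> S"
proof (induction n)
  case 0 then show ?case by (simp add: subgroup.one_closed)
next
  case (Suc n)
  then show ?case using subgroup.m_closed[OF Suc.prems(1) Suc.IH Suc.prems(2)]
    by (simp add: subgroup.mem_carrier)
qed

lemma pow_pow_mod:
  assumes Nn: "N \<lhd> G" and a: "a \<in> carrier G" and b: "b \<in> carrier G"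
    and ab: "cm G a b \<in> N" and an: "a [^] (n::nat) \<in> N" and bn: "b [^] n \<in> N"
  shows "(a \<otimes> b) [^] n \<in> N"
proof -
  define q where "q = (\<lambda>y. N #> y)"
  have qh: "q \<in> hom G (G Mod N)" unfolding q_def by (rule quot_hom[OF Nn])
  interpret Q: group "G Mod N" by (rule quot_group[OF Nn])
  have qm: "q (g \<otimes> h) = q g \<otimes>\<^bsub>G Mod N\<^esub> q h" if "g \<in> carrier G" "h \<in> carrier G" for g h
    using hom_mult[OF qh that] .
  have qc: "q g \<in> carrier (G Mod N)" if "g \<in> carrier G" for g
    using hom_in_carrier[OF qh that] .
  have qp: "q (g [^] k) = q g [^]\<^bsub>G Mod N\<^esub> k" if "g \<in> carrier G" for g and k :: nat
    using hom_nat_pow[OF qh that is_group Q.is_group] .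
  have q1: "q g = \<one>\<^bsub>G Mod N\<^esub> \<longleftrightarrow> g \<in> N" if "g \<in> carrier G" for g
    using quot_eq_one[OF Nn that] by (simp add: q_def)
  have comm: "q a \<otimes>\<^bsub>G Mod N\<^esub> q b = q b \<otimes>\<^bsub>G Mod N\<^esub> q a"
  proof -
    have "(a \<otimes> b) \<otimes> inv (b \<otimes> a) = cm G a b" using a b by (simp add: cm_def m_assoc inv_mult_group)
    then have "q (a \<otimes> b) = q (b \<otimes> a)" using quot_eq[OF Nn, of "a \<otimes> b" "b \<otimes> a"] ab a b by (simp add: q_def)
    then show ?thesis using qm a b by (simp del: mult_FactGroup)
  qed
  have "q ((a \<otimes> b) [^] n) = (q a \<otimes>\<^bsub>G Mod N\<^esub> q b) [^]\<^bsub>G Mod N\<^esub> n"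
    using qp qm a b by (simp del: mult_FactGroup)
  also have "... = q a [^]\<^bsub>G Mod N\<^esub> n \<otimes>\<^bsub>G Mod N\<^esub> q b [^]\<^bsub>G Mod N\<^esub> n"
    by (rule Q.pow_mult_distrib[OF comm qc[OF a] qc[OF b]])
  also have "... = \<one>\<^bsub>G Mod N\<^esub>"
  proof -
    have "q (a [^] n) = \<one>\<^bsub>G Mod N\<^esub>" using q1[OF nat_pow_closed[OF a]] an by blast
    then have ea: "q a [^]\<^bsub>G Mod N\<^esub> n = \<one>\<^bsub>G Mod N\<^esub>" using qp[OF a, of n] by metis
    have "q (b [^] n) = \<one>\<^bsub>G Mod N\<^esub>" using q1[OF nat_pow_closed[OF b]] bn by blast
    then have eb: "q b [^]\<^bsub>G Mod N\<^esub> n = \<one>\<^bsub>G Mod N\<^esub>" using qp[OF b, of n] by metis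
    show ?thesis by (simp only: ea eb Q.l_one Q.one_closed)
  qed
  finally show ?thesis using q1[OF nat_pow_closed[OF m_closed[OF a b]]] by blast
qed

end


context group begin

lemma cm_mult_right: "u \<in> carrier G \<Longrightarrow> g \<in> carrier G \<Longrightarrow> h \<in> carrier G \<Longrightarrow>
  cm G u (g \<otimes> h) = cm G u g \<otimes> (g \<otimes> cm G u h \<otimes> inv g)"
  by (simp add: cm_def m_assoc inv_mult_group)

lemma pow_lcs:
  assumes Xc: "Xs \<subseteq> carrier G" and gen: "generate G Xs = carrier G"
    and Xn: "\<And>x. x \<in> Xs \<Longrightarrow> x [^] (n::nat) = \<one>"
  shows "w \<in> lcs_aux G j \<Longrightarrow> w [^] n \<in> lcs_aux G (Suc j)"
proof -
  assume w: "w \<in> lcs_aux G j"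
  define R where "R = lcs_aux G (Suc j)"
  have Rn: "R \<lhd> G" unfolding R_def by (rule lcs_normal)
  have RS: "subgroup R G" unfolding R_def by (rule lcs_subgroup)
  define S where "S = {w \<in> lcs_aux G j. w [^] n \<in> R}"
  have S: "subgroup S G"
  proof (rule subgroupI)
    show "S \<subseteq> carrier G" unfolding S_def using lcs_carrier[of j] by blast
    show "S \<noteq> {}" unfolding S_def using subgroup.one_closed[OF lcs_subgroup[of j]] subgroup.one_closed[OF RS] by force
  next
    fix a assume a: "a \<in> S"
    have al: "a \<in> lcs_aux G j" and an: "a [^] n \<in> R" using a S_def by auto
    have ac: "a \<in> carrier G" by (rule lcs_carrierD[OF al])
    have "inv a [^] n = inv (a [^] n)" by (rule nat_pow_inv[OF ac])
    then have "inv a [^] n \<in> R" using subgroup.m_inv_closed[OF RS an] by simp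
    then show "inv a \<in> S" unfolding S_def using subgroup.m_inv_closed[OF lcs_subgroup al] by simp
  next
    fix a b assume a: "a \<in> S" and b: "b \<in> S"
    have al: "a \<in> lcs_aux G j" and an: "a [^] n \<in> R" using a S_def by auto
    have bl: "b \<in> lcs_aux G j" and bn: "b [^] n \<in> R" using b S_def by auto
    have ac: "a \<in> carrier G" by (rule lcs_carrierD[OF al])
    have bc: "b \<in> carrier G" by (rule lcs_carrierD[OF bl])
    have "(a \<otimes> b) [^] n \<in> R"
      by (rule pow_pow_mod[OF Rn ac bc _ an bn]) (unfold R_def, rule cm_in_lcs[OF al bc])
    then show "a \<otimes> b \<in> S" unfolding S_def using subgroup.m_closed[OF lcs_subgroup al bl] by simp
  qed
  have "lcs_aux G j \<subseteq> S"
  proof (cases j)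
    case 0
    have "Xs \<subseteq> S" unfolding S_def using Xc Xn subgroup.one_closed[OF RS] 0 by auto
    then have "generate G Xs \<subseteq> S" by (rule generate_subgroup_incl[OF _ S])
    then show ?thesis using gen 0 by simp
  next
    case (Suc j')
    define q where "q = (\<lambda>y. R #> y)"
    have qh: "q \<in> hom G (G Mod R)" unfolding q_def by (rule quot_hom[OF Rn])
    interpret Q: group "G Mod R" by (rule quot_group[OF Rn])
    have qm: "q (g \<otimes> h) = q g \<otimes>\<^bsub>G Mod R\<^esub> q h" if "g \<in> carrier G" "h \<in> carrier G" for g h
      using hom_mult[OF qh that] .
    have qc: "q g \<in> carrier (G Mod R)" if "g \<in> carrier G" for g
      using hom_in_carrier[OF qh that] .
    have qp: "q (g [^] k) = q g [^]\<^bsub>G Mod R\<^esub> k" if "g \<in> carrier G" for g and k :: nat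
      using hom_nat_pow[OF qh that is_group Q.is_group] .
    have q1: "q g = \<one>\<^bsub>G Mod R\<^esub> \<longleftrightarrow> g \<in> R" if "g \<in> carrier G" for g
      using quot_eq_one[OF Rn that] by (simp add: q_def)
    have qcomm: "q a \<otimes>\<^bsub>G Mod R\<^esub> q b = q b \<otimes>\<^bsub>G Mod R\<^esub> q a" if al: "a \<in> lcs_aux G j" and bc: "b \<in> carrier G" for a b
    proof -
      have ac: "a \<in> carrier G" by (rule lcs_carrierD[OF al])
      have "(a \<otimes> b) \<otimes> inv (b \<otimes> a) = cm G a b" using ac bc by (simp add: cm_def m_assoc inv_mult_group)
      then have "q (a \<otimes> b) = q (b \<otimes> a)" using quot_eq[OF Rn, of "a \<otimes> b" "b \<otimes> a"] cm_in_lcs[OF al bc] ac bc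
        by (simp add: q_def R_def)
      then show ?thesis using qm ac bc by (simp del: mult_FactGroup)
    qed
    have gens: "{cm G h k | h k. h \<in> lcs_aux G j' \<and> k \<in> carrier G} \<subseteq> S"
    proof (rule subsetI)
      fix z assume "z \<in> {cm G h k | h k. h \<in> lcs_aux G j' \<and> k \<in> carrier G}"
      then obtain u g where u: "u \<in> lcs_aux G j'" and g: "g \<in> carrier G" and zug: "z = cm G u g" by blast
      have uc: "u \<in> carrier G" by (rule lcs_carrierD[OF u])
      define \<psi> where "\<psi> = (\<lambda>g. q (cm G u g))"
      have cml: "cm G u h \<in> lcs_aux G j" if "h \<in> carrier G" for h
        using cm_in_lcs[OF u that] Suc by simp
      have psic: "\<psi> h \<in> carrier (G Mod R)" if "h \<in> carrier G" for h
        unfolding \<psi>_def using qc uc that by simp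
      have psim: "\<psi> (g1 \<otimes> g2) = \<psi> g1 \<otimes>\<^bsub>G Mod R\<^esub> \<psi> g2" if g1: "g1 \<in> carrier G" and g2: "g2 \<in> carrier G" for g1 g2
      proof -
        have wl: "cm G u g2 \<in> lcs_aux G j" by (rule cml[OF g2])
        have wc: "cm G u g2 \<in> carrier G" using uc g2 by simp
        have "(g1 \<otimes> cm G u g2 \<otimes> inv g1) \<otimes> inv (cm G u g2) = cm G g1 (cm G u g2)"
          by (simp add: cm_def)
        then have "q (g1 \<otimes> cm G u g2 \<otimes> inv g1) = q (cm G u g2)"
          using quot_eq[OF Rn, of "g1 \<otimes> cm G u g2 \<otimes> inv g1" "cm G u g2"] cm_in_lcs'[OF wl g1] wc g1
          by (simp add: q_def R_def)
        then show ?thesis unfolding \<psi>_def using cm_mult_right[OF uc g1 g2] qm uc g1 g2 wc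
          by (simp del: mult_FactGroup)
      qed
      have psih: "\<psi> \<in> hom G (G Mod R)" unfolding hom_def by (intro CollectI conjI Pi_I ballI psic psim)
      have psione: "\<psi> \<one> = \<one>\<^bsub>G Mod R\<^esub>" by (rule hom_one[OF psih is_group Q.is_group])
      define T where "T = {h \<in> carrier G. \<psi> h [^]\<^bsub>G Mod R\<^esub> n = \<one>\<^bsub>G Mod R\<^esub>}"
      have T: "subgroup T G"
      proof (rule subgroupI)
        show "T \<subseteq> carrier G" unfolding T_def by blast
        have "\<one> \<in> T" unfolding T_def using psione Q.nat_pow_one by (simp del: one_FactGroup)
        then show "T \<noteq> {}" by blast
      next
        fix a assume a: "a \<in> T"
        have ac: "a \<in> carrier G" and an: "\<psi> a [^]\<^bsub>G Mod R\<^esub> n = \<one>\<^bsub>G Mod R\<^esub>" using a T_def by auto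
        have "\<psi> (inv a) = inv\<^bsub>G Mod R\<^esub> \<psi> a" by (rule hom_hom_inv[OF is_group Q.is_group psih ac])
        then have "\<psi> (inv a) [^]\<^bsub>G Mod R\<^esub> n = inv\<^bsub>G Mod R\<^esub> (\<psi> a [^]\<^bsub>G Mod R\<^esub> n)"
          using Q.nat_pow_inv[OF psic[OF ac]] by simp
        then show "inv a \<in> T" unfolding T_def using an ac by (simp del: one_FactGroup)
      next
        fix a b assume a: "a \<in> T" and b: "b \<in> T"
        have ac: "a \<in> carrier G" and an: "\<psi> a [^]\<^bsub>G Mod R\<^esub> n = \<one>\<^bsub>G Mod R\<^esub>" using a T_def by auto
        have bc: "b \<in> carrier G" and bn: "\<psi> b [^]\<^bsub>G Mod R\<^esub> n = \<one>\<^bsub>G Mod R\<^esub>" using b T_def by auto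
        have comm: "\<psi> a \<otimes>\<^bsub>G Mod R\<^esub> \<psi> b = \<psi> b \<otimes>\<^bsub>G Mod R\<^esub> \<psi> a"
          unfolding \<psi>_def by (rule qcomm[OF cml[OF ac]]) (use uc bc in simp)
        have "\<psi> (a \<otimes> b) [^]\<^bsub>G Mod R\<^esub> n = (\<psi> a \<otimes>\<^bsub>G Mod R\<^esub> \<psi> b) [^]\<^bsub>G Mod R\<^esub> n"
          using psim[OF ac bc] by simp
        also have "... = \<psi> a [^]\<^bsub>G Mod R\<^esub> n \<otimes>\<^bsub>G Mod R\<^esub> \<psi> b [^]\<^bsub>G Mod R\<^esub> n"
          by (rule Q.pow_mult_distrib[OF comm psic[OF ac] psic[OF bc]])
        also have "... = \<one>\<^bsub>G Mod R\<^esub>" by (simp only: an bn Q.l_one Q.one_closed)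
        finally show "a \<otimes> b \<in> T" unfolding T_def using ac bc by simp
      qed
      have "Xs \<subseteq> T"
      proof
        fix x assume x: "x \<in> Xs"
        have xc: "x \<in> carrier G" using x Xc by blast
        have "\<psi> x [^]\<^bsub>G Mod R\<^esub> n = \<psi> (x [^] n)"
          using hom_nat_pow[OF psih xc is_group Q.is_group] by simp
        also have "... = \<one>\<^bsub>G Mod R\<^esub>" using Xn[OF x] psione by simp
        finally show "x \<in> T" unfolding T_def using xc by simp
      qed
      then have "generate G Xs \<subseteq> T" by (rule generate_subgroup_incl[OF _ T])
      then have "g \<in> T" using gen g by blast
      then have "\<psi> g [^]\<^bsub>G Mod R\<^esub> n = \<one>\<^bsub>G Mod R\<^esub>" unfolding T_def by blast
      then have "q (z [^] n) = \<one>\<^bsub>G Mod R\<^esub>" unfolding \<psi>_def using qp uc g zug by simp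
      then have "z [^] n \<in> R" using q1 zug uc g by simp
      moreover have "z \<in> lcs_aux G j" using zug cml[OF g] by simp
      ultimately show "z \<in> S" unfolding S_def by simp
    qed
    have "lcs_aux G (Suc j') \<subseteq> S"
      using generate_subgroup_incl[OF gens S] by (simp add: csub_alt)
    then show ?thesis using Suc by simp
  qed
  then show ?thesis using w unfolding S_def R_def by blast
qed

lemma pow_lcs_all:
  assumes Xc: "Xs \<subseteq> carrier G" and gen: "generate G Xs = carrier G"
    and Xn: "\<And>x. x \<in> Xs \<Longrightarrow> x [^] (n::nat) = \<one>"
  shows "h \<in> carrier G \<Longrightarrow> h [^] (n ^ j) \<in> lcs_aux G j"
proof (induction j)
  case 0 then show ?case by simp
next
  case (Suc j)
  have "(h [^] (n ^ j)) [^] n \<in> lcs_aux G (Suc j)"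
    by (rule pow_lcs[OF Xc gen Xn Suc.IH[OF Suc.prems]])
  then show ?case using nat_pow_pow[OF Suc.prems] by (simp add: mult.commute)
qed

end




context group begin

lemma Dm_mult:
  assumes x: "x \<in> carrier G" and y: "y \<in> carrier G" and k: "k \<ge> 1" and l: "l \<ge> 1"
    and xk: "x [^] (k::nat) \<in> lcs_aux G i" and yl: "y [^] (l::nat) \<in> lcs_aux G i"
  shows "\<exists>n::nat. n \<ge> 1 \<and> (x \<otimes> y) [^] n \<in> lcs_aux G i"
proof -
  define n0 where "n0 = k * l"
  have n0: "n0 \<ge> 1" using k l by (simp add: n0_def)
  have LS: "subgroup (lcs_aux G i) G" by (rule lcs_subgroup)
  have xn: "x [^] n0 \<in> lcs_aux G i"
    using sub_pow[OF LS xk, of l] nat_pow_pow[OF x, of k l] by (simp add: n0_def)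
  have yn: "y [^] n0 \<in> lcs_aux G i"
    using sub_pow[OF LS yl, of k] nat_pow_pow[OF y, of l k] by (simp add: n0_def mult.commute)
  define Xs where "Xs = {x, y}"
  have Xc: "Xs \<subseteq> carrier G" using x y by (simp add: Xs_def)
  define H0 where "H0 = generate G Xs"
  have H0S: "subgroup H0 G" unfolding H0_def by (rule generate_is_subgroup[OF Xc])
  have XH: "Xs \<subseteq> H0" unfolding H0_def by (rule subsetI, erule generate.incl)
  define K where "K = G\<lparr>carrier := H0\<rparr>"
  have KG: "group K" unfolding K_def by (rule subgroup_imp_group[OF H0S])
  interpret K: group K by (rule KG)
  have cK: "carrier K = H0" by (simp add: K_def)
  have mK: "\<And>a b. a \<otimes>\<^bsub>K\<^esub> b = a \<otimes> b" by (simp add: K_def)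
  have pK: "\<And>a (m::nat). a [^]\<^bsub>K\<^esub> m = a [^] m" unfolding K_def by (rule nat_pow_consistent[symmetric])
  define N where "N = lcs_aux G i \<inter> H0"
  have Nn: "N \<lhd> K" unfolding N_def K_def by (rule normal_Int_subgroup[OF H0S lcs_normal])
  define Q where "Q = K Mod N"
  interpret Q: group Q unfolding Q_def by (rule K.quot_group[OF Nn])
  define p where "p = (\<lambda>z. N #>\<^bsub>K\<^esub> z)"
  have ph: "p \<in> hom K Q" unfolding p_def Q_def by (rule K.quot_hom[OF Nn])
  have gph: "group_hom K Q p" by (simp add: group_hom_def group_hom_axioms_def KG Q.is_group ph)
  have p1: "p z = \<one>\<^bsub>Q\<^esub> \<longleftrightarrow> z \<in> N" if "z \<in> carrier K" for z
    using K.quot_eq_one[OF Nn that] by (simp add: p_def Q_def)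
  have surj: "p ` carrier K = carrier Q"
    by (simp add: p_def Q_def carrier_FactGroup)
  have genK: "generate K Xs = H0" unfolding K_def H0_def
    by (rule generate_consistent[OF _ H0S[unfolded H0_def]]) (use XH[unfolded H0_def] in simp)
  have genQ: "generate Q (p ` Xs) = carrier Q"
    using group_hom.generate_img[OF gph, of Xs] XH genK surj cK by simp
  have XQ: "p ` Xs \<subseteq> carrier Q" using XH cK hom_in_carrier[OF ph] by blast
  have powX: "z [^]\<^bsub>Q\<^esub> n0 = \<one>\<^bsub>Q\<^esub>" if z: "z \<in> p ` Xs" for z
  proof -
    obtain w where w: "w \<in> Xs" "z = p w" using z by blast
    have wK: "w \<in> carrier K" using w XH cK by blast
    have wn: "w [^] n0 \<in> lcs_aux G i" using w xn yn by (auto simp: Xs_def)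
    have "w [^] n0 \<in> H0" using sub_pow[OF H0S] w XH by blast
    then have "w [^]\<^bsub>K\<^esub> n0 \<in> N" using wn by (simp add: N_def pK)
    then have "p (w [^]\<^bsub>K\<^esub> n0) = \<one>\<^bsub>Q\<^esub>" using p1 K.nat_pow_closed[OF wK] by blast
    then show ?thesis using w hom_nat_pow[OF ph wK KG Q.is_group] by simp
  qed
  have all: "h [^]\<^bsub>Q\<^esub> (n0 ^ i) \<in> lcs_aux Q i" if "h \<in> carrier Q" for h
    by (rule Q.pow_lcs_all[OF XQ genQ powX that])
  have idh: "group_hom K G (\<lambda>z. z)"
    unfolding group_hom_def group_hom_axioms_def hom_def
    using KG is_group H0S subgroup.subset by (auto simp: K_def)
  have LK: "lcs_aux K i \<subseteq> N"
  proof -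
    have "lcs_aux K i \<subseteq> lcs_aux G i" using lcs_hom[OF idh, of i] by simp
    moreover have "lcs_aux K i \<subseteq> H0" using K.lcs_carrier[of i] cK by simp
    ultimately show ?thesis by (auto simp: N_def)
  qed
  have LQ: "lcs_aux Q i = p ` lcs_aux K i" using lcs_hom[OF gph, of i] surj by simp
  have xy: "x \<otimes> y \<in> H0" using subgroup.m_closed[OF H0S] XH by (simp add: Xs_def)
  have xyK: "x \<otimes> y \<in> carrier K" using xy cK by simp
  have "p (x \<otimes> y) [^]\<^bsub>Q\<^esub> (n0 ^ i) \<in> p ` lcs_aux K i"
    using all[OF hom_in_carrier[OF ph xyK]] LQ by simp
  then obtain w where w: "w \<in> lcs_aux K i" "p (x \<otimes> y) [^]\<^bsub>Q\<^esub> (n0 ^ i) = p w" by blast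
  have "p w = \<one>\<^bsub>Q\<^esub>" using p1 w LK K.lcs_carrierD[OF w(1)] by blast
  then have "p ((x \<otimes> y) [^]\<^bsub>K\<^esub> (n0 ^ i)) = \<one>\<^bsub>Q\<^esub>"
    using w(2) hom_nat_pow[OF ph xyK KG Q.is_group] mK by simp
  then have "(x \<otimes> y) [^]\<^bsub>K\<^esub> (n0 ^ i) \<in> N" using p1 K.nat_pow_closed[OF xyK] by blast
  then have "(x \<otimes> y) [^] (n0 ^ i) \<in> lcs_aux G i" by (simp add: N_def pK)
  moreover have "n0 ^ i \<ge> 1" using n0 by simp
  ultimately show ?thesis by blast
qed

end




context sdp begin

lemma iA_pow: "a \<in> carrier A \<Longrightarrow> (a, \<one>\<^bsub>C\<^esub>) [^]\<^bsub>G\<^esub> (n::nat) = (a [^]\<^bsub>A\<^esub> n, \<one>\<^bsub>C\<^esub>)"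
  using hom_nat_pow[OF iA_hom _ A.is_group G.is_group] by metis

lemma iC_pow: "c \<in> carrier C \<Longrightarrow> (\<one>\<^bsub>A\<^esub>, c) [^]\<^bsub>G\<^esub> (n::nat) = (\<one>\<^bsub>A\<^esub>, c [^]\<^bsub>C\<^esub> n)"
  using hom_nat_pow[OF iC_hom _ C.is_group G.is_group] by metis

lemma pC_pow: "g \<in> carrier G \<Longrightarrow> snd (g [^]\<^bsub>G\<^esub> (n::nat)) = snd g [^]\<^bsub>C\<^esub> n"
  using hom_nat_pow[OF pC_hom _ G.is_group C.is_group] by metis

lemma rat_G:
  assumes m: "m \<ge> 1"
  shows "rational_lower_central G m = rational_lower_central A m \<times> rational_lower_central C m"
proof (cases "m \<le> 1")
  case True then show ?thesis by (simp add: rational_lower_central_def)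
next
  case False
  define i where "i = m - 1"
  have LG: "lower_central G m = lcs_aux A i \<times> lcs_aux C i"
    by (simp add: lower_central_def i_def lcs_G)
  have LA: "lower_central A m = lcs_aux A i" by (simp add: lower_central_def i_def)
  have LC: "lower_central C m = lcs_aux C i" by (simp add: lower_central_def i_def)
  have LGi: "lcs_aux G i = lcs_aux A i \<times> lcs_aux C i" by (rule lcs_G)
  have oneA: "\<one>\<^bsub>A\<^esub> \<in> lcs_aux A i" by (rule subgroup.one_closed[OF A.lcs_subgroup])
  have oneC: "\<one>\<^bsub>C\<^esub> \<in> lcs_aux C i" by (rule subgroup.one_closed[OF C.lcs_subgroup])
  show ?thesis
  proof (intro equalityI subsetI)
    fix g assume g: "g \<in> rational_lower_central G m"
    have gm: "g \<in> {x \<in> carrier G. \<exists>k::nat. k \<ge> 1 \<and> x [^]\<^bsub>G\<^esub> k \<in> lower_central G m}"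
      using g False unfolding rational_lower_central_def by (simp only: if_False)
    have g1: "g \<in> carrier G" using gm by (simp only: mem_Collect_eq)
    have g2: "\<exists>k::nat. k \<ge> 1 \<and> g [^]\<^bsub>G\<^esub> k \<in> lower_central G m" using gm by (simp only: mem_Collect_eq)
    from g2 obtain k :: nat where kk: "k \<ge> 1 \<and> g [^]\<^bsub>G\<^esub> k \<in> lower_central G m" ..
    have k: "k \<ge> 1" using kk by (rule conjunct1)
    have gk0: "g [^]\<^bsub>G\<^esub> k \<in> lower_central G m" using kk by (rule conjunct2)
    obtain a c where gac: "g = (a, c)" and a: "a \<in> carrier A" and c: "c \<in> carrier C" using g1 by auto
    have gk: "(a, c) [^]\<^bsub>G\<^esub> k \<in> lcs_aux A i \<times> lcs_aux C i" using gk0 gac LG by simp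
    have "snd ((a, c) [^]\<^bsub>G\<^esub> k) \<in> lcs_aux C i" using gk by (simp add: mem_Times_iff)
    then have ck: "c [^]\<^bsub>C\<^esub> k \<in> lcs_aux C i" using pC_pow[of "(a, c)" k] a c by simp
    have ic: "inv\<^bsub>C\<^esub> c \<in> carrier C" using c by simp
    have "(\<one>\<^bsub>A\<^esub>, inv\<^bsub>C\<^esub> c) [^]\<^bsub>G\<^esub> k = (\<one>\<^bsub>A\<^esub>, inv\<^bsub>C\<^esub> (c [^]\<^bsub>C\<^esub> k))"
      using iC_pow[OF ic, of k] C.nat_pow_inv[OF c] by simp
    moreover have "inv\<^bsub>C\<^esub> (c [^]\<^bsub>C\<^esub> k) \<in> lcs_aux C i"
      by (rule subgroup.m_inv_closed[OF C.lcs_subgroup ck])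
    ultimately have yk: "(\<one>\<^bsub>A\<^esub>, inv\<^bsub>C\<^esub> c) [^]\<^bsub>G\<^esub> k \<in> lcs_aux G i" using oneA LGi by simp
    have xk: "(a, c) [^]\<^bsub>G\<^esub> k \<in> lcs_aux G i" using gk LGi by simp
    obtain n :: nat where n1: "n \<ge> 1" and xyn: "((a, c) \<otimes>\<^bsub>G\<^esub> (\<one>\<^bsub>A\<^esub>, inv\<^bsub>C\<^esub> c)) [^]\<^bsub>G\<^esub> n \<in> lcs_aux G i"
    proof -
      have ac: "(a, c) \<in> carrier G" using a c by simp
      have yc: "(\<one>\<^bsub>A\<^esub>, inv\<^bsub>C\<^esub> c) \<in> carrier G" using ic by simp
      show ?thesis using G.Dm_mult[OF ac yc k k xk yk] that by blast
    qed
    have "(a, c) \<otimes>\<^bsub>G\<^esub> (\<one>\<^bsub>A\<^esub>, inv\<^bsub>C\<^esub> c) = (a, \<one>\<^bsub>C\<^esub>)" using a c by simp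
    then have "(a [^]\<^bsub>A\<^esub> n, \<one>\<^bsub>C\<^esub>) \<in> lcs_aux G i" using xyn iA_pow[OF a, of n] by simp
    then have an: "a [^]\<^bsub>A\<^esub> n \<in> lcs_aux A i" using LGi by simp
    have "\<exists>k::nat. k \<ge> 1 \<and> a [^]\<^bsub>A\<^esub> k \<in> lower_central A m"
      using n1 an LA by (intro exI[of _ n]) simp
    then have "a \<in> rational_lower_central A m" unfolding rational_lower_central_def
      using False a by simp
    moreover have "\<exists>k::nat. k \<ge> 1 \<and> c [^]\<^bsub>C\<^esub> k \<in> lower_central C m"
      using k ck LC by (intro exI[of _ k]) simp
    then have "c \<in> rational_lower_central C m" unfolding rational_lower_central_def
      using False c by simp
    ultimately show "g \<in> rational_lower_central A m \<times> rational_lower_central C m" using gac by simp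
  next
    fix g assume g: "g \<in> rational_lower_central A m \<times> rational_lower_central C m"
    then obtain a c and k l :: nat where gac: "g = (a, c)" and a: "a \<in> carrier A" and c: "c \<in> carrier C"
      and k: "k \<ge> 1" and ak: "a [^]\<^bsub>A\<^esub> k \<in> lcs_aux A i"
      and l: "l \<ge> 1" and cl: "c [^]\<^bsub>C\<^esub> l \<in> lcs_aux C i"
      using False LA LC unfolding rational_lower_central_def by auto
    have xk: "(a, \<one>\<^bsub>C\<^esub>) [^]\<^bsub>G\<^esub> k \<in> lcs_aux G i"
      using iA_pow[OF a, of k] ak oneC LGi by simp
    have yl: "(\<one>\<^bsub>A\<^esub>, c) [^]\<^bsub>G\<^esub> l \<in> lcs_aux G i"
      using iC_pow[OF c, of l] cl oneA LGi by simp
    obtain n :: nat where n1: "n \<ge> 1" and xyn: "((a, \<one>\<^bsub>C\<^esub>) \<otimes>\<^bsub>G\<^esub> (\<one>\<^bsub>A\<^esub>, c)) [^]\<^bsub>G\<^esub> n \<in> lcs_aux G i"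
    proof -
      have ac: "(a, \<one>\<^bsub>C\<^esub>) \<in> carrier G" using a by simp
      have yc: "(\<one>\<^bsub>A\<^esub>, c) \<in> carrier G" using c by simp
      show ?thesis using G.Dm_mult[OF ac yc k l xk yl] that by blast
    qed
    have "(a, \<one>\<^bsub>C\<^esub>) \<otimes>\<^bsub>G\<^esub> (\<one>\<^bsub>A\<^esub>, c) = (a, c)" using a c by simp
    then have "(a, c) [^]\<^bsub>G\<^esub> n \<in> lower_central G m" using xyn LG LGi by simp
    then show "g \<in> rational_lower_central G m" unfolding rational_lower_central_def
      using False gac a c n1 by auto
  qed
qed

lemma lc_G: "lower_central G m = lower_central A m \<times> lower_central C m"
  by (simp add: lower_central_def lcs_G)

end

theorem proposition3p2:
  fixes A :: "('a, 'x) monoid_scheme" and C :: "('c, 'y) monoid_scheme"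
    and \<phi> :: "'c \<Rightarrow> 'a \<Rightarrow> 'a"
  assumes "group A" and "group C"
    and "\<phi> \<in> hom C (AutoGroup A)"
    and "\<And>c a. c \<in> carrier C \<Longrightarrow> a \<in> carrier A \<Longrightarrow>
           derived A (carrier A) #>\<^bsub>A\<^esub> (\<phi> c a) = derived A (carrier A) #>\<^bsub>A\<^esub> a"
    and "m \<ge> 1"
  shows "lower_central (semidirect_product A C \<phi>) m = lower_central A m \<times> lower_central C m
       \<and> rational_lower_central (semidirect_product A C \<phi>) m
           = rational_lower_central A m \<times> rational_lower_central C m"
proof -
  interpret sdp A C \<phi>
    by (rule sdp.intro[OF assms(1,2)], rule sdp_axioms.intro[OF assms(3,4)])
  show ?thesis using lc_G rat_G[OF assms(5)] by blast
qed



end
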